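(* Let $n\ge 3$ and let $K_n$ be the complete graph on $n$ vertices with every edge having conductance $1$. Let $r\ne s$ be vertices, let $R_{rs}$ be the effective resistance between $r$ and $s$ in $K_n$, and let $(a,b)$ be an edge. Let $R'_{rs}$ be the effective resistance between $r$ and $s$ after the edge $(a,b)$ is altered, and write $R'_{rs}=R_{rs}-\Delta$. (1) If the resistance of $(a,b)$ goes to $0$ (its conductance tends to $+\infty$, with $R'_{rs}$ understood as the limit), then $\Delta=\frac{2}{n}$ if $\{a,b\}=\{r,s\}$; $\Delta=\frac{1}{2n}$ if $\{a,b\}$ and $\{r,s\}$ share exactly one vertex; and $\Delta=0$ if $\{a,b\}\cap\{r,s\}=\emptyset$. (2) If the resistance of $(a,b)$ goes to $+\infty$ (the edge is removed), then $\Delta=-\frac{4}{n(n-2)}$ if $\{a,b\}=\{r,s\}$; $\Delta=-\frac{1}{n(n-2)}$ if $\{a,b\}$ and $\{r,s\}$ share exactly one vertex; and $\Delta=0$ if $\{a,b\}\cap\{r,s\}=\emptyset$.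
   Context: For vertices $r,s$ of an electrical network (a graph with edge conductances), the effective resistance between them is the reciprocal of the net current flowing through the network when a unit voltage difference is applied between $r$ and $s$. *)

theory Defs
  imports "HOL-Analysis.Analysis"
begin

text \<open>Electrical network on vertex set {0..<n}; c i j is the conductance of edge {i,j}
  (symmetric, nonnegative, 0 means no edge).\<close>

definition unit_potential :: "nat \<Rightarrow> (nat \<Rightarrow> nat \<Rightarrow> real) \<Rightarrow> nat \<Rightarrow> nat \<Rightarrow> (nat \<Rightarrow> real) \<Rightarrow> bool" where
  "unit_potential n c r s v \<longleftrightarrow> v r = 1 \<and> v s = 0 \<and>
     (\<forall>i<n. i \<noteq> r \<longrightarrow> i \<noteq> s \<longrightarrow> (\<Sum>j<n. c i j * (v i - v j)) = 0)"

definition net_current :: "nat \<Rightarrow> (nat \<Rightarrow> nat \<Rightarrow> real) \<Rightarrow> nat \<Rightarrow> (nat \<Rightarrow> real) \<Rightarrow> real" where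
  "net_current n c r v = (\<Sum>j<n. c r j * (v r - v j))"

definition eff_resistance :: "nat \<Rightarrow> (nat \<Rightarrow> nat \<Rightarrow> real) \<Rightarrow> nat \<Rightarrow> nat \<Rightarrow> real" where
  "eff_resistance n c r s =
     1 / (THE I. \<exists>v. unit_potential n c r s v \<and> I = net_current n c r v)"

definition complete_cond :: "nat \<Rightarrow> nat \<Rightarrow> real" where
  "complete_cond i j = (if i = j then 0 else 1)"

definition altered_cond :: "nat \<Rightarrow> nat \<Rightarrow> real \<Rightarrow> nat \<Rightarrow> nat \<Rightarrow> real" where
  "altered_cond a b t i j = (if i = j then 0 else if {i, j} = {a, b} then t else 1)"

end

theory Submission
  imports Defs "HOL-Real_Asymp.Real_Asymp"
begin


lemma kcl:
  assumes "i < n" "a < n" "b < n" "a \<noteq> b"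
  shows "(\<Sum>j<n. altered_cond a b t i j * (v i - v j)) = real n * v i - (\<Sum>j<n. v j)
     + (if i = a then (t-1)*(v a - v b) else if i = b then (t-1)*(v b - v a) else 0)"
proof -
  have eq: "\<And>j. altered_cond a b t i j * (v i - v j) = (v i - v j) +
     (if i = a \<and> j = b then (t-1)*(v a - v b) else if i = b \<and> j = a then (t-1)*(v b - v a) else 0)"
    unfolding altered_cond_def using assms(4) by (auto simp: doubleton_eq_iff algebra_simps)
  have s1: "(\<Sum>j<n. v i - v j) = real n * v i - (\<Sum>j<n. v j)"
    by (simp add: sum_subtractf)
  have s2: "(\<Sum>j<n. (if i = a \<and> j = b then (t-1)*(v a - v b) else if i = b \<and> j = a then (t-1)*(v b - v a) else 0))
     = (if i = a then (t-1)*(v a - v b) else if i = b then (t-1)*(v b - v a) else 0)"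
  proof (cases "i = a")
    case True
    then have "\<And>j. (if i = a \<and> j = b then (t-1)*(v a - v b) else if i = b \<and> j = a then (t-1)*(v b - v a) else 0) = (if j = b then (t-1)*(v a - v b) else 0)"
      using assms(4) by auto
    then show ?thesis using True assms by (simp add: sum.delta)
  next
    case False
    then have "\<And>j. (if i = a \<and> j = b then (t-1)*(v a - v b) else if i = b \<and> j = a then (t-1)*(v b - v a) else 0) = (if i = b then (if j = a then (t-1)*(v b - v a) else 0) else 0)"
      by auto
    then show ?thesis using False assms by (simp add: sum.delta)
  qed
  show ?thesis unfolding eq sum.distrib s1 s2 ..
qed

lemma complete_alt: "complete_cond = altered_cond a b 1"
  by (auto simp: fun_eq_iff complete_cond_def altered_cond_def)

lemma altered_sym: "altered_cond a b = altered_cond b a"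
  by (auto simp: fun_eq_iff altered_cond_def insert_commute)

lemma sum_except:
  assumes "P \<subseteq> {..<n}" "\<forall>j<n. j \<notin> P \<longrightarrow> v j = w"
  shows "(\<Sum>j<n. v j) = real n * w + (\<Sum>j\<in>P. v j - w)"
proof -
  have "(\<Sum>j<n. v j) = (\<Sum>j<n. v j - w) + real n * w" by (simp add: sum_subtractf)
  moreover have "(\<Sum>j<n. v j - w) = (\<Sum>j\<in>P. v j - w)"
    by (rule sum.mono_neutral_right) (use assms in auto)
  ultimately show ?thesis by simp
qed

lemma eff_res_eq:
  assumes "unit_potential n c r s v0" "\<And>v. unit_potential n c r s v \<Longrightarrow> \<forall>i<n. v i = v0 i"
  shows "eff_resistance n c r s = 1 / net_current n c r v0"
proof -
  have "(THE I. \<exists>v. unit_potential n c r s v \<and> I = net_current n c r v) = net_current n c r v0"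
  proof (rule the_equality)
    show "\<exists>v. unit_potential n c r s v \<and> net_current n c r v0 = net_current n c r v" using assms(1) by blast
  next
    fix I assume "\<exists>v. unit_potential n c r s v \<and> I = net_current n c r v"
    then obtain v where v: "unit_potential n c r s v" "I = net_current n c r v" by blast
    have "\<forall>i<n. v i = v0 i" using assms(2) v(1) by blast
    moreover have "v r = v0 r" using v(1) assms(1) unfolding unit_potential_def by simp
    ultimately show "I = net_current n c r v0" unfolding v(2) net_current_def by (intro sum.cong) auto
  qed
  then show ?thesis unfolding eff_resistance_def by simp
qed



lemma others:
  assumes "unit_potential n (altered_cond a b t) r s v" "i < n" "a < n" "b < n" "a \<noteq> b"
    "i \<noteq> r" "i \<noteq> s" "i \<noteq> a" "i \<noteq> b"
  shows "v i = (\<Sum>j<n. v j) / real n"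
proof -
  have "(\<Sum>j<n. altered_cond a b t i j * (v i - v j)) = 0" using assms unfolding unit_potential_def by blast
  then have "real n * v i - (\<Sum>j<n. v j) = 0" using kcl[OF assms(2-5), of t v] assms by simp
  moreover have "real n > 0" using assms(2) by simp
  ultimately show ?thesis by (simp add: field_simps)
qed

lemma at_vertex:
  assumes "unit_potential n (altered_cond a b t) r s v" "i < n" "a < n" "b < n" "a \<noteq> b"
    "i \<noteq> r" "i \<noteq> s"
  shows "real n * v i - (\<Sum>j<n. v j)
     + (if i = a then (t-1)*(v a - v b) else if i = b then (t-1)*(v b - v a) else 0) = 0"
  using assms kcl[OF assms(2-5), of t v] unfolding unit_potential_def by metis

lemma confA:
  assumes "n \<ge> 3" "r < n" "s < n" "r \<noteq> s"
  shows "eff_resistance n (altered_cond r s t) r s = 1 / (real n / 2 + t - 1)"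
proof -
  define v0 where "v0 = (\<lambda>i. if i = r then 1 else if i = s then 0 else (1/2::real))"
  have S0: "(\<Sum>j<n. v0 j) = real n / 2"
    using sum_except[of "{r,s}" n v0 "1/2"] assms by (auto simp: v0_def)
  have up: "unit_potential n (altered_cond r s t) r s v0"
    unfolding unit_potential_def
  proof (intro conjI allI impI)
    fix i assume i: "i < n" "i \<noteq> r" "i \<noteq> s"
    show "(\<Sum>j<n. altered_cond r s t i j * (v0 i - v0 j)) = 0"
      unfolding kcl[OF i(1) assms(2,3,4)] S0 using i by (simp add: v0_def)
  qed (use assms in \<open>auto simp: v0_def\<close>)
  have uniq: "\<forall>i<n. v i = v0 i" if v: "unit_potential n (altered_cond r s t) r s v" for v
  proof -
    define w where "w = (\<Sum>j<n. v j) / real n"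
    have n0: "real n > 0" using assms by simp
    have o: "\<forall>j<n. j \<notin> {r,s} \<longrightarrow> v j = w"
      using others[OF v _ assms(2,3,4)] unfolding w_def by auto
    have "(\<Sum>j<n. v j) = real n * w + ((v r - w) + (v s - w))"
      using sum_except[OF _ o] assms by simp
    moreover have "v r = 1" "v s = 0" using v unfolding unit_potential_def by auto
    ultimately have "w = 1/2" using n0 unfolding w_def by (simp add: field_simps)
    then show ?thesis using o \<open>v r = 1\<close> \<open>v s = 0\<close> by (auto simp: v0_def)
  qed
  have nc: "net_current n (altered_cond r s t) r v0 = real n / 2 + t - 1"
    unfolding net_current_def kcl[OF assms(2,2,3,4)] S0 using assms by (simp add: v0_def)
  show ?thesis using eff_res_eq[OF up uniq] nc by simp
qed

lemma confC:
  assumes "n \<ge> 3" "r < n" "s < n" "r \<noteq> s" "a < n" "b < n" "a \<noteq> b"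
    "a \<noteq> r" "a \<noteq> s" "b \<noteq> r" "b \<noteq> s" "t \<ge> 0"
  shows "eff_resistance n (altered_cond a b t) r s = 2 / real n"
proof -
  define v0 where "v0 = (\<lambda>i. if i = r then 1 else if i = s then 0 else (1/2::real))"
  have S0: "(\<Sum>j<n. v0 j) = real n / 2"
    using sum_except[of "{r,s}" n v0 "1/2"] assms by (auto simp: v0_def)
  have up: "unit_potential n (altered_cond a b t) r s v0"
    unfolding unit_potential_def
  proof (intro conjI allI impI)
    fix i assume i: "i < n" "i \<noteq> r" "i \<noteq> s"
    show "(\<Sum>j<n. altered_cond a b t i j * (v0 i - v0 j)) = 0"
      unfolding kcl[OF i(1) assms(5,6,7)] S0 using i assms by (simp add: v0_def)
  qed (use assms in \<open>auto simp: v0_def\<close>)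
  have uniq: "\<forall>i<n. v i = v0 i" if v: "unit_potential n (altered_cond a b t) r s v" for v
  proof -
    define S where "S = (\<Sum>j<n. v j)"
    define w where "w = S / real n"
    have n0: "real n > 0" using assms by simp
    have o: "\<forall>j<n. j \<notin> {r,s,a,b} \<longrightarrow> v j = w"
      using others[OF v _ assms(5,6,7)] unfolding w_def S_def by auto
    have "S = real n * w + ((v r - w) + (v s - w) + (v a - w) + (v b - w))"
      using sum_except[OF _ o] assms unfolding S_def by simp
    moreover have vr: "v r = 1" "v s = 0" using v unfolding unit_potential_def by auto
    moreover have nw: "real n * w = S" unfolding w_def using n0 by simp
    ultimately have e1: "4 * w = 1 + v a + v b" by simp
    have ea: "real n * v a - S + (t-1)*(v a - v b) = 0"
      using at_vertex[OF v assms(5,5,6,7,8,9)] unfolding S_def by simp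
    have eb: "real n * v b - S + (t-1)*(v b - v a) = 0"
      using at_vertex[OF v assms(6,5,6,7,10,11)] assms(7) unfolding S_def by simp
    have "real n * (v a + v b) = real n * (2 * w)" using ea eb nw by (simp add: algebra_simps)
    then have "v a + v b = 2 * w" using n0 by simp
    then have w2: "w = 1/2" "v a + v b = 1" using e1 by simp_all
    have "(real n + 2*t - 2) * (v a - v b) = 0" using ea eb by (simp add: algebra_simps)
    moreover have "real n + 2*t - 2 > 0" using assms by simp
    ultimately have "v a = v b" by simp
    then have ab: "v a = 1/2" "v b = 1/2" using w2 by simp_all
    show ?thesis using o vr ab w2 assms by (auto simp: v0_def)
  qed
  have nc: "net_current n (altered_cond a b t) r v0 = real n / 2"
    unfolding net_current_def kcl[OF assms(2,5,6,7)] S0 using assms by (simp add: v0_def)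
  show ?thesis using eff_res_eq[OF up uniq] nc by simp
qed



lemma confB1:
  assumes "n \<ge> 3" "r < n" "s < n" "r \<noteq> s" "x < n" "x \<noteq> r" "x \<noteq> s" "t \<ge> 0"
  shows "eff_resistance n (altered_cond r x t) r s = (2*real n + 3*t - 3) / (real n * (real n + 2*t - 2))"
proof -
  define D where "D = 2*real n + 3*t - 3"
  have D0: "D > 0" using assms unfolding D_def by simp
  have n0: "real n > 0" using assms by simp
  define y where "y = (real n + 3*t - 3) / D"
  have yD: "y * D = real n + 3*t - 3" unfolding y_def using D0 by simp
  define w where "w = (1 + y) / 3"
  define v0 where "v0 = (\<lambda>i. if i = r then 1 else if i = s then 0 else if i = x then y else w)"
  have S0: "(\<Sum>j<n. v0 j) = real n * w"
    using sum_except[of "{r,s,x}" n v0 w] assms by (auto simp: v0_def w_def field_simps)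
  have up: "unit_potential n (altered_cond r x t) r s v0"
    unfolding unit_potential_def
  proof (intro conjI allI impI)
    fix i assume i: "i < n" "i \<noteq> r" "i \<noteq> s"
    have "real n * y - real n * w + (t-1)*(y - 1) = (y * D - (real n + 3*t - 3)) / 3"
      unfolding w_def D_def by (simp add: field_simps)
    also have "\<dots> = 0" using yD by simp
    finally have "real n * y - real n * w + (t-1)*(y - 1) = 0" .
    then show "(\<Sum>j<n. altered_cond r x t i j * (v0 i - v0 j)) = 0"
      unfolding kcl[OF i(1) assms(2,5) assms(6)[symmetric]] S0 using i assms by (auto simp: v0_def)
  qed (use assms in \<open>auto simp: v0_def\<close>)
  have uniq: "\<forall>i<n. v i = v0 i" if v: "unit_potential n (altered_cond r x t) r s v" for v
  proof -
    define S where "S = (\<Sum>j<n. v j)"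
    define u where "u = S / real n"
    have o: "\<forall>j<n. j \<notin> {r,s,x} \<longrightarrow> v j = u"
      using others[OF v _ assms(2,5) assms(6)[symmetric]] unfolding u_def S_def by auto
    have "S = real n * u + ((v r - u) + (v s - u) + (v x - u))"
      using sum_except[OF _ o] assms unfolding S_def by simp
    moreover have vr: "v r = 1" "v s = 0" using v unfolding unit_potential_def by auto
    moreover have nu: "real n * u = S" unfolding u_def using n0 by simp
    ultimately have e1: "3 * u = 1 + v x" by simp
    have "3*S = real n * (3*u)" using nu by simp
    then have S3: "3*S = real n * (1 + v x)" using e1 by simp
    have ex: "real n * v x - S + (t-1)*(v x - v r) = 0"
      using at_vertex[OF v assms(5,2,5) assms(6)[symmetric] assms(6,7)] assms(6) unfolding S_def by simp
    have "v x * D = real n + 3*t - 3"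
    proof -
      have "3 * (real n * v x - S + (t-1)*(v x - v r)) = v x * D - (real n + 3*t - 3)"
        using S3 vr unfolding D_def by (simp add: algebra_simps)
      then show ?thesis using ex by simp
    qed
    then have "v x = y" using yD D0 by (metis mult_right_cancel order_less_irrefl)
    then have "u = w" using e1 unfolding w_def by simp
    then show ?thesis using o vr \<open>v x = y\<close> assms by (auto simp: v0_def)
  qed
  have "net_current n (altered_cond r x t) r v0 = real n - real n * w + (t-1)*(1 - y)"
    unfolding net_current_def kcl[OF assms(2,2,5) assms(6)[symmetric]] S0 using assms by (simp add: v0_def)
  also have "\<dots> = real n * (real n + 2*t - 2) / D"
  proof -
    have y1: "y = 1 - real n / D" unfolding y_def using D0 by (simp add: field_simps D_def)
    show ?thesis unfolding w_def y1 using D0 by (simp add: field_simps) (simp add: D_def algebra_simps)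
  qed
  finally have nc: "net_current n (altered_cond r x t) r v0 = real n * (real n + 2*t - 2) / D" .
  show ?thesis using eff_res_eq[OF up uniq] nc unfolding D_def by simp
qed

lemma confB2:
  assumes "n \<ge> 3" "r < n" "s < n" "r \<noteq> s" "x < n" "x \<noteq> r" "x \<noteq> s" "t \<ge> 0"
  shows "eff_resistance n (altered_cond s x t) r s = (2*real n + 3*t - 3) / (real n * (real n + 2*t - 2))"
proof -
  define D where "D = 2*real n + 3*t - 3"
  have D0: "D > 0" using assms unfolding D_def by simp
  have n0: "real n > 0" using assms by simp
  define y where "y = real n / D"
  have yD: "y * D = real n" unfolding y_def using D0 by simp
  define w where "w = (1 + y) / 3"
  define v0 where "v0 = (\<lambda>i. if i = r then 1 else if i = s then 0 else if i = x then y else w)"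
  have S0: "(\<Sum>j<n. v0 j) = real n * w"
    using sum_except[of "{r,s,x}" n v0 w] assms by (auto simp: v0_def w_def field_simps)
  have up: "unit_potential n (altered_cond s x t) r s v0"
    unfolding unit_potential_def
  proof (intro conjI allI impI)
    fix i assume i: "i < n" "i \<noteq> r" "i \<noteq> s"
    have "real n * y - real n * w + (t-1)*(y - 0) = (y * D - real n) / 3"
      unfolding w_def D_def by (simp add: field_simps)
    also have "\<dots> = 0" using yD by simp
    finally have "real n * y - real n * w + (t-1)*(y - 0) = 0" .
    then show "(\<Sum>j<n. altered_cond s x t i j * (v0 i - v0 j)) = 0"
      unfolding kcl[OF i(1) assms(3,5) assms(7)[symmetric]] S0 using i assms by (auto simp: v0_def)
  qed (use assms in \<open>auto simp: v0_def\<close>)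
  have uniq: "\<forall>i<n. v i = v0 i" if v: "unit_potential n (altered_cond s x t) r s v" for v
  proof -
    define S where "S = (\<Sum>j<n. v j)"
    define u where "u = S / real n"
    have o: "\<forall>j<n. j \<notin> {r,s,x} \<longrightarrow> v j = u"
      using others[OF v _ assms(3,5) assms(7)[symmetric]] unfolding u_def S_def by auto
    have "S = real n * u + ((v r - u) + (v s - u) + (v x - u))"
      using sum_except[OF _ o] assms unfolding S_def by simp
    moreover have vr: "v r = 1" "v s = 0" using v unfolding unit_potential_def by auto
    moreover have nu: "real n * u = S" unfolding u_def using n0 by simp
    ultimately have e1: "3 * u = 1 + v x" by simp
    have "3*S = real n * (3*u)" using nu by simp
    then have S3: "3*S = real n * (1 + v x)" using e1 by simp
    have ex: "real n * v x - S + (t-1)*(v x - v s) = 0"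
      using at_vertex[OF v assms(5,3,5) assms(7)[symmetric] assms(6,7)] assms(7) unfolding S_def by simp
    have "v x * D = real n"
    proof -
      have "3 * (real n * v x - S + (t-1)*(v x - v s)) = v x * D - real n"
        using S3 vr unfolding D_def by (simp add: algebra_simps)
      then show ?thesis using ex by simp
    qed
    then have "v x = y" using yD D0 by (metis mult_right_cancel order_less_irrefl)
    then have "u = w" using e1 unfolding w_def by simp
    then show ?thesis using o vr \<open>v x = y\<close> assms by (auto simp: v0_def)
  qed
  have "net_current n (altered_cond s x t) r v0 = real n - real n * w"
    unfolding net_current_def kcl[OF assms(2,3,5) assms(7)[symmetric]] S0 using assms by (simp add: v0_def)
  also have "\<dots> = real n * (real n + 2*t - 2) / D"
    unfolding w_def y_def using D0 unfolding D_def by (simp add: field_simps)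
  finally have nc: "net_current n (altered_cond s x t) r v0 = real n * (real n + 2*t - 2) / D" .
  show ?thesis using eff_res_eq[OF up uniq] nc unfolding D_def by simp
qed



lemma confB:
  assumes "n \<ge> 3" "r < n" "s < n" "r \<noteq> s" "a < n" "b < n" "a \<noteq> b" "t \<ge> 0"
    "card ({a, b} \<inter> {r, s}) = 1"
  shows "eff_resistance n (altered_cond a b t) r s = (2*real n + 3*t - 3) / (real n * (real n + 2*t - 2))"
proof -
  have "\<exists>z. {a, b} \<inter> {r, s} = {z}" using assms(9) by (simp add: card_1_singleton_iff)
  then obtain z where z: "{a, b} \<inter> {r, s} = {z}" by blast
  have "z \<in> {a, b} \<inter> {r, s}" using z by simp
  then have h1: "a = r \<or> a = s \<or> b = r \<or> b = s" by auto
  have h2: "\<not> (a = r \<and> b = s)" "\<not> (a = s \<and> b = r)"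
  proof -
    show "\<not> (a = r \<and> b = s)"
    proof
      assume "a = r \<and> b = s"
      then have "{a, b} \<inter> {r, s} = {r, s}" by auto
      then show False using assms(9) assms(4) by simp
    qed
    show "\<not> (a = s \<and> b = r)"
    proof
      assume "a = s \<and> b = r"
      then have "{a, b} \<inter> {r, s} = {r, s}" by auto
      then show False using assms(9) assms(4) by simp
    qed
  qed
  have "(a = r \<and> b \<noteq> s) \<or> (b = r \<and> a \<noteq> s) \<or> (a = s \<and> b \<noteq> r) \<or> (b = s \<and> a \<noteq> r)"
    using h1 h2 assms(4,7) by blast
  then show ?thesis
  proof (elim disjE conjE)
    assume "a = r" "b \<noteq> s" then show ?thesis using confB1[of n r s b t] assms(1-8) by simp
  next
    assume "b = r" "a \<noteq> s" then show ?thesis using confB1[of n r s a t] assms(1-8) altered_sym[of a b] by simp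
  next
    assume "a = s" "b \<noteq> r" then show ?thesis using confB2[of n r s b t] assms(1-8) by simp
  next
    assume "b = s" "a \<noteq> r" then show ?thesis using confB2[of n r s a t] assms(1-8) altered_sym[of a b] by simp
  qed
qed

lemma confA':
  assumes "n \<ge> 3" "r < n" "s < n" "r \<noteq> s" "{a, b} = {r, s}"
  shows "eff_resistance n (altered_cond a b t) r s = 1 / (real n / 2 + t - 1)"
proof -
  have "altered_cond a b = altered_cond r s"
    using assms(5) altered_sym[of r s] by (auto simp: doubleton_eq_iff)
  then show ?thesis using confA[OF assms(1-4)] by simp
qed

lemma R0: assumes "n \<ge> 3" "r < n" "s < n" "r \<noteq> s"
  shows "eff_resistance n complete_cond r s = 2 / real n"
  using confA[OF assms, of 1] complete_alt[of r s] by simp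

lemma auxB: "(N::real) > 0 \<Longrightarrow> p > 0 \<Longrightarrow> 3/(2*N) + 1/(2*p) = ((3*p+N)/2)/(N*p)"
  by (simp add: field_simps)
lemma auxB0: "(N::real) > 2 \<Longrightarrow> (2*N - 3)/(N*(N-2)) = 2/N - (-1/(N*(N-2)))"
  by (simp add: field_simps)

lemma limA: "((\<lambda>t::real. 1 / (c / 2 + t - 1)) \<longlongrightarrow> 0) at_top" by real_asymp
lemma limB: "((\<lambda>t::real. 1 / (2 * (c + 2 * t - 2))) \<longlongrightarrow> 0) at_top" by real_asymp

theorem lemmaB1:
  fixes n r s a b :: nat
  assumes "n \<ge> 3" and "r < n" and "s < n" and "r \<noteq> s"
    and "a < n" and "b < n" and "a \<noteq> b"
  shows
   "({a, b} = {r, s} \<longrightarrow>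
       ((\<lambda>t. eff_resistance n (altered_cond a b t) r s) \<longlongrightarrow>
          eff_resistance n complete_cond r s - 2 / real n) at_top)
    \<and> (card ({a, b} \<inter> {r, s}) = 1 \<longrightarrow>
       ((\<lambda>t. eff_resistance n (altered_cond a b t) r s) \<longlongrightarrow>
          eff_resistance n complete_cond r s - 1 / (2 * real n)) at_top)
    \<and> ({a, b} \<inter> {r, s} = {} \<longrightarrow>
       ((\<lambda>t. eff_resistance n (altered_cond a b t) r s) \<longlongrightarrow>
          eff_resistance n complete_cond r s - 0) at_top)
    \<and> ({a, b} = {r, s} \<longrightarrow>
       eff_resistance n (altered_cond a b 0) r s =
          eff_resistance n complete_cond r s - (- 4 / (real n * (real n - 2))))
    \<and> (card ({a, b} \<inter> {r, s}) = 1 \<longrightarrow>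
       eff_resistance n (altered_cond a b 0) r s =
          eff_resistance n complete_cond r s - (- 1 / (real n * (real n - 2))))
    \<and> ({a, b} \<inter> {r, s} = {} \<longrightarrow>
       eff_resistance n (altered_cond a b 0) r s =
          eff_resistance n complete_cond r s - 0)"
proof -
  have R: "eff_resistance n complete_cond r s = 2 / real n" using R0 assms by blast
  have n3: "real n \<ge> 3" using assms by simp
  have dis: "a \<noteq> r" "a \<noteq> s" "b \<noteq> r" "b \<noteq> s" if "{a, b} \<inter> {r, s} = {}" using that by auto
  have c1: "((\<lambda>t. eff_resistance n (altered_cond a b t) r s) \<longlongrightarrow>
          eff_resistance n complete_cond r s - 2 / real n) at_top" if h: "{a, b} = {r, s}"
    unfolding R using confA'[OF assms(1-4) h] limA[of "real n"] by simp
  have c2: "((\<lambda>t. eff_resistance n (altered_cond a b t) r s) \<longlongrightarrow>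
          eff_resistance n complete_cond r s - 1 / (2 * real n)) at_top" if h: "card ({a, b} \<inter> {r, s}) = 1"
  proof -
    have ev: "\<forall>\<^sub>F t in at_top. 3 / (2 * real n) + 1 / (2 * (real n + 2 * t - 2)) =
                eff_resistance n (altered_cond a b t) r s"
      using eventually_ge_at_top[of "0::real"]
    proof (rule eventually_mono)
      fix t :: real assume t: "t \<ge> 0"
      have p: "real n + 2*t - 2 > 0" using n3 t by simp
      have e: "2*real n + 3*t - 3 = (3*(real n + 2*t - 2) + real n)/2" by simp
      show "3 / (2 * real n) + 1 / (2 * (real n + 2 * t - 2)) = eff_resistance n (altered_cond a b t) r s"
        unfolding confB[OF assms t h] e using auxB[OF _ p, of "real n"] n3 by simp
    qed
    have "((\<lambda>t. 3 / (2 * real n) + 1 / (2 * (real n + 2 * t - 2))) \<longlongrightarrow> 3 / (2 * real n) + 0) at_top"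
      by (intro tendsto_add tendsto_const limB)
    then have "((\<lambda>t. 3 / (2 * real n) + 1 / (2 * (real n + 2 * t - 2))) \<longlongrightarrow> 3 / (2 * real n)) at_top"
      by simp
    then have "((\<lambda>t. eff_resistance n (altered_cond a b t) r s) \<longlongrightarrow> 3 / (2 * real n)) at_top"
      by (rule tendsto_cong[OF ev, THEN iffD1])
    moreover have eq: "2 / real n - 1 / (2 * real n) = 3 / (2 * real n)" using n3 by (simp add: field_simps)
    ultimately show ?thesis unfolding R by (simp only: eq)
  qed
  have c3: "((\<lambda>t. eff_resistance n (altered_cond a b t) r s) \<longlongrightarrow>
          eff_resistance n complete_cond r s - 0) at_top" if h: "{a, b} \<inter> {r, s} = {}"
  proof -
    have ev: "\<forall>\<^sub>F t in at_top. 2 / real n = eff_resistance n (altered_cond a b t) r s"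
      using eventually_ge_at_top[of "0::real"]
      by (rule eventually_mono) (use confC[OF assms(1-7) dis[OF h]] in simp)
    have "((\<lambda>t. 2 / real n) \<longlongrightarrow> 2 / real n) at_top" by simp
    then show ?thesis unfolding R by (simp add: tendsto_cong[OF ev, THEN iffD1])
  qed
  have c4: "eff_resistance n (altered_cond a b 0) r s =
          eff_resistance n complete_cond r s - (- 4 / (real n * (real n - 2)))" if h: "{a, b} = {r, s}"
    unfolding R confA'[OF assms(1-4) h] using n3 by (simp add: field_simps)
  have c5: "eff_resistance n (altered_cond a b 0) r s =
          eff_resistance n complete_cond r s - (- 1 / (real n * (real n - 2)))" if h: "card ({a, b} \<inter> {r, s}) = 1"
    unfolding R confB[OF assms order_refl h] using auxB0[of "real n"] n3 by simp
  have c6: "eff_resistance n (altered_cond a b 0) r s =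
          eff_resistance n complete_cond r s - 0" if h: "{a, b} \<inter> {r, s} = {}"
    unfolding R using confC[OF assms(1-7) dis[OF h]] by simp
  show ?thesis
    apply (intro conjI impI)
    apply (erule c1)
    apply (erule c2)
    apply (erule c3)
    apply (erule c4)
    apply (erule c5)
    apply (erule c6)
    done
qed

end
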